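(* Let $P \in S$ have degree $n > 0$ in $x$, and suppose its leading coefficient $p_n \in K[y]$ satisfies $0 < \deg_y(p_n) \leq n$. Then $C_S(P) = K[P]$.
   Context: Standing conventions: $K$ is a field, $R = K[y]$, $\sigma$ is a $K$-algebra endomorphism of $R$ with $\deg_y(\sigma(y)) > 1$, and $\delta$ is a $K$-linear $\sigma$-derivation of $R$ ($\delta(ab) = \sigma(a)\delta(b) + \delta(a)b$). $S = R[x;\sigma,\delta]$ is the Ore extension (polynomials $\sum r_i x^i$, $r_i\in R$, with $xr = \sigma(r)x + \delta(r)$). Degree of an element of $S$ means degree in $x$; its leading coefficient is the coefficient in $K[y]$ of the highest power of $x$. $C_S(P)$ is the centralizer of $P$ in $S$, and $K[P] = \{\sum_i c_i P^i : c_i \in K\}$. *)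

theory Defs
  imports "HOL-Computational_Algebra.Polynomial"
begin

text \<open>R = K[y] is represented by the type 'a poly (variable y); elements of the
Ore extension S = R[x; sigma, delta] are represented by their coefficient lists
in x, i.e. by the type 'a poly poly, with the twisted multiplication below.\<close>

definition K_alg_endo :: "('a::field poly \<Rightarrow> 'a poly) \<Rightarrow> bool" where
  "K_alg_endo \<sigma> \<longleftrightarrow>
     (\<forall>a b. \<sigma> (a + b) = \<sigma> a + \<sigma> b) \<and>
     (\<forall>a b. \<sigma> (a * b) = \<sigma> a * \<sigma> b) \<and>
     (\<forall>c a. \<sigma> (smult c a) = smult c (\<sigma> a)) \<and>
     \<sigma> 1 = 1"

definition sigma_derivation :: "('a::field poly \<Rightarrow> 'a poly) \<Rightarrow> ('a poly \<Rightarrow> 'a poly) \<Rightarrow> bool" where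
  "sigma_derivation \<sigma> \<delta> \<longleftrightarrow>
     (\<forall>a b. \<delta> (a + b) = \<delta> a + \<delta> b) \<and>
     (\<forall>c a. \<delta> (smult c a) = smult c (\<delta> a)) \<and>
     (\<forall>a b. \<delta> (a * b) = \<sigma> a * \<delta> b + \<delta> a * b)"

text \<open>Left multiplication by x:  x * (sum r_k x^k) = sum (sigma(r_k) x^(k+1) + delta(r_k) x^k).\<close>
definition ore_left_x :: "('a::field poly \<Rightarrow> 'a poly) \<Rightarrow> ('a poly \<Rightarrow> 'a poly) \<Rightarrow> 'a poly poly \<Rightarrow> 'a poly poly" where
  "ore_left_x \<sigma> \<delta> p = pCons 0 (map_poly \<sigma> p) + map_poly \<delta> p"

definition ore_mult :: "('a::field poly \<Rightarrow> 'a poly) \<Rightarrow> ('a poly \<Rightarrow> 'a poly) \<Rightarrow> 'a poly poly \<Rightarrow> 'a poly poly \<Rightarrow> 'a poly poly" where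
  "ore_mult \<sigma> \<delta> A B = (\<Sum>i\<le>degree A. smult (coeff A i) ((ore_left_x \<sigma> \<delta> ^^ i) B))"

primrec ore_pow :: "('a::field poly \<Rightarrow> 'a poly) \<Rightarrow> ('a poly \<Rightarrow> 'a poly) \<Rightarrow> 'a poly poly \<Rightarrow> nat \<Rightarrow> 'a poly poly" where
  "ore_pow \<sigma> \<delta> P 0 = 1"
| "ore_pow \<sigma> \<delta> P (Suc n) = ore_mult \<sigma> \<delta> P (ore_pow \<sigma> \<delta> P n)"

definition ore_centralizer :: "('a::field poly \<Rightarrow> 'a poly) \<Rightarrow> ('a poly \<Rightarrow> 'a poly) \<Rightarrow> 'a poly poly \<Rightarrow> 'a poly poly set" where
  "ore_centralizer \<sigma> \<delta> P = {Q. ore_mult \<sigma> \<delta> Q P = ore_mult \<sigma> \<delta> P Q}"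

definition ore_K_poly_in :: "('a::field poly \<Rightarrow> 'a poly) \<Rightarrow> ('a poly \<Rightarrow> 'a poly) \<Rightarrow> 'a poly poly \<Rightarrow> 'a poly poly set" where
  "ore_K_poly_in \<sigma> \<delta> P = {Q. \<exists>(c::nat \<Rightarrow> 'a) m. Q = (\<Sum>i\<le>m. smult [:c i:] (ore_pow \<sigma> \<delta> P i))}"

end

theory Submission imports Defs begin

lemma two_pow_ge: "2 * s \<le> (2::nat) ^ s"
proof (induction s)
  case (Suc s)
  then show ?case by (cases s) auto
qed simp

lemma int_dvd_pow: "(x::int) - 1 dvd x ^ k - 1"
proof (induction k)
  case (Suc k)
  have eq: "x ^ Suc k - 1 = x * (x ^ k - 1) + (x - 1)" by (simp add: algebra_simps)
  show ?case unfolding eq using Suc.IH by (intro dvd_add dvd_mult) auto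
qed simp

lemma nt_dvd:
  fixes d n a b m :: nat
  assumes d: "2 \<le> d" and n: "0 < n" and a1: "1 \<le> a" and an: "a \<le> n"
    and e: "b + a * d ^ m = a + b * d ^ n"
  shows "n dvd m"
proof (rule ccontr)
  assume nd: "\<not> n dvd m"
  define r where "r = m mod n"
  define k where "k = m div n"
  have r0: "0 < r" using nd by (simp add: r_def dvd_eq_mod_eq_0)
  have rn: "r < n" using n by (simp add: r_def)
  have m: "m = k * n + r" by (simp add: r_def k_def)
  define D where "D = int d"
  have D2: "2 \<le> D" using d by (simp add: D_def)
  have e': "int b + int a * D ^ m = int a + int b * D ^ n"
    using arg_cong[OF e, of int] by (simp add: D_def)
  have "D ^ n - 1 dvd (D ^ n) ^ k - 1" by (rule int_dvd_pow)
  then obtain S where S0: "(D ^ n) ^ k - 1 = (D ^ n - 1) * S"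
    by (elim dvdE) blast
  have "D ^ (k * n) = (D ^ n) ^ k" by (simp add: power_mult[symmetric] mult.commute)
  with S0 have S: "D ^ (k * n) - 1 = (D ^ n - 1) * S" by simp
  have Dkn: "D ^ (k * n) = (D ^ n - 1) * S + 1" using S by simp
  have "D ^ m = D ^ r * D ^ (k * n)" by (simp add: m power_add mult.commute)
  then have Dm: "D ^ m = D ^ r * ((D ^ n - 1) * S + 1)" by (simp only: Dkn)
  define t where "t = int b - int a * D ^ r * S"
  have teq: "t * (D ^ n - 1) = int a * (D ^ r - 1)"
  proof -
    have "int b * (D ^ n - 1) = int a * (D ^ m - 1)" using e' by (simp add: algebra_simps)
    then show ?thesis unfolding t_def Dm by (simp add: algebra_simps)
  qed
  have Dr2: "2 \<le> D ^ r"
  proof -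
    have "D ^ 1 \<le> D ^ r" using r0 D2 by (intro power_increasing) auto
    then show ?thesis using D2 by simp
  qed
  have Drn: "D ^ r < D ^ n" using rn D2 by (intro power_strict_increasing) auto
  have Dnr: "D ^ n = D ^ r * D ^ (n - r)" using rn by (simp add: power_add[symmetric])
  have rhs_pos: "0 < int a * (D ^ r - 1)" using a1 Dr2 by simp
  have Dn1: "0 < D ^ n - 1" using Drn Dr2 by simp
  have t0: "0 < t" using teq rhs_pos Dn1 by (metis zero_less_mult_pos2)
  have "t * (D ^ n - 1) < int a * (D ^ n - 1)"
    using teq a1 Drn by simp
  then have ta: "t < int a" using Dn1 by simp
  have key: "int a - t = D ^ r * (int a - t * D ^ (n - r))"
    using teq Dnr by (simp add: algebra_simps)
  have "0 < D ^ r * (int a - t * D ^ (n - r))" using key ta by linarith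
  then have u: "0 < int a - t * D ^ (n - r)"
    using Dr2 D2 by (simp add: zero_less_mult_iff)
  have A1: "D ^ r < int a"
  proof -
    have "D ^ r * 1 \<le> D ^ r * (int a - t * D ^ (n - r))"
      using u Dr2 by (intro mult_left_mono) auto
    then show ?thesis using key t0 by simp
  qed
  have A2: "D ^ (n - r) < int a"
  proof -
    have "1 * D ^ (n - r) \<le> t * D ^ (n - r)"
      using t0 D2 by (intro mult_right_mono) auto
    then show ?thesis using u by simp
  qed
  define s where "s = max r (n - r)"
  have "2 ^ s \<le> D ^ s" using D2 by (intro power_mono) auto
  moreover have "D ^ s < int a" using A1 A2 by (simp add: s_def max_def)
  moreover have "int n \<le> 2 ^ s"
  proof -
    have "n \<le> 2 * s" using rn by (simp add: s_def)
    also have "\<dots> \<le> 2 ^ s" by (rule two_pow_ge)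
    finally show ?thesis by (metis of_nat_le_iff of_nat_numeral of_nat_power)
  qed
  ultimately show False using an by simp
qed

locale ore =
  fixes \<sigma> \<delta> :: "'a::field poly \<Rightarrow> 'a poly"
  assumes endo: "K_alg_endo \<sigma>" and der: "sigma_derivation \<sigma> \<delta>"
    and degs: "degree (\<sigma> [:0, 1:]) > 1"
begin

abbreviation X where "X \<equiv> ore_left_x \<sigma> \<delta>"
abbreviation mult (infixl "\<star>" 70) where "mult \<equiv> ore_mult \<sigma> \<delta>"

lemma s_add: "\<sigma> (a + b) = \<sigma> a + \<sigma> b" using endo by (simp add: K_alg_endo_def)
lemma s_mult: "\<sigma> (a * b) = \<sigma> a * \<sigma> b" using endo by (simp add: K_alg_endo_def)
lemma s_smult: "\<sigma> (smult c a) = smult c (\<sigma> a)" using endo by (simp add: K_alg_endo_def)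
lemma s_one: "\<sigma> 1 = 1" using endo by (simp add: K_alg_endo_def)
lemma s_0: "\<sigma> 0 = 0" using s_add[of 0 0] by (metis add_cancel_right_right)
lemma s_minus: "\<sigma> (- a) = - \<sigma> a" using s_add[of a "-a"] s_0 by (metis minus_unique add.right_inverse)
lemma s_diff: "\<sigma> (a - b) = \<sigma> a - \<sigma> b" using s_add[of a "-b"] s_minus by simp
lemma s_const: "\<sigma> [:c:] = [:c:]" using s_smult[of c 1] s_one by simp

lemma d_add: "\<delta> (a + b) = \<delta> a + \<delta> b" using der by (simp add: sigma_derivation_def)
lemma d_mult: "\<delta> (a * b) = \<sigma> a * \<delta> b + \<delta> a * b" using der by (simp add: sigma_derivation_def)
lemma d_smult: "\<delta> (smult c a) = smult c (\<delta> a)" using der by (simp add: sigma_derivation_def)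
lemma d_0: "\<delta> 0 = 0" using d_add[of 0 0] by (metis add_cancel_right_right)
lemma d_minus: "\<delta> (- a) = - \<delta> a" using d_add[of a "-a"] d_0 by (metis minus_unique add.right_inverse)
lemma d_diff: "\<delta> (a - b) = \<delta> a - \<delta> b" using d_add[of a "-b"] d_minus by simp
lemma d_one: "\<delta> 1 = 0" using d_mult[of 1 1] s_one by (metis add_cancel_right_right mult_1 mult_1_right)
lemma d_const: "\<delta> [:c:] = 0" using d_smult[of c 1] d_one by simp

definition dd where "dd = degree (\<sigma> [:0, 1:])"

lemma s_pcomp: "\<sigma> f = pcompose f (\<sigma> [:0,1:])"
proof (induction f)
  case (pCons a p)
  have "\<sigma> (pCons a p) = \<sigma> ([:a:] + [:0,1:] * p)" by simp
  also have "\<dots> = [:a:] + \<sigma> [:0,1:] * \<sigma> p"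
    by (simp only: s_add s_mult s_const)
  finally have "\<sigma> (pCons a p) = [:a:] + \<sigma> [:0,1:] * \<sigma> p" .
  then show ?case using pCons.IH pcompose_pCons[of a p "\<sigma> [:0,1:]"] by metis
qed (simp add: s_0)

lemma s_degree: "degree (\<sigma> f) = degree f * dd"
  by (metis s_pcomp degree_pcompose dd_def)

lemma s_eq0: "\<sigma> f = 0 \<longleftrightarrow> f = 0"
proof -
  have "degree (\<sigma> [:0,1:]) > 0" using degs by simp
  then show ?thesis using pcompose_eq_0_iff s_pcomp by metis
qed

lemma sk_degree: "degree ((\<sigma>^^k) f) = degree f * dd ^ k"
  by (induction k) (auto simp: s_degree)

lemma sk_eq0: "(\<sigma>^^k) f = 0 \<longleftrightarrow> f = 0"
  by (induction k) (auto simp: s_eq0)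

lemma sk_diff: "(\<sigma>^^k) (a - b) = (\<sigma>^^k) a - (\<sigma>^^k) b"
  by (induction k) (auto simp: s_diff)

lemma sk_smult: "(\<sigma>^^k) (smult c a) = smult c ((\<sigma>^^k) a)"
  by (induction k) (auto simp: s_smult)

lemma coeff_X: "coeff (X C) k = (case k of 0 \<Rightarrow> 0 | Suc j \<Rightarrow> \<sigma> (coeff C j)) + \<delta> (coeff C k)"
  by (cases k) (simp_all add: ore_left_x_def coeff_map_poly s_0 d_0 coeff_pCons)

lemma X_add: "X (B + C) = X B + X C"
  by (rule poly_eqI) (simp add: coeff_X s_add d_add split: nat.split)

lemma X_diff: "X (B - C) = X B - X C"
  by (rule poly_eqI) (simp add: coeff_X s_diff d_diff split: nat.split)

lemma X_0: "X 0 = 0"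
  by (rule poly_eqI) (simp add: coeff_X s_0 d_0 split: nat.split)

lemma X_smult: "X (smult b C) = smult (\<sigma> b) (X C) + smult (\<delta> b) C"
  by (rule poly_eqI) (simp add: coeff_X s_mult d_mult algebra_simps split: nat.split)

lemma X_smult_const: "X (smult [:c:] C) = smult [:c:] (X C)"
  by (simp add: X_smult s_const d_const)

lemma X_pCons: "X (pCons b B) = pCons (\<delta> b) ([:\<sigma> b:] + X B)"
  by (rule poly_eqI) (simp add: coeff_X coeff_pCons split: nat.split)


lemma smult_sum_r: "smult s (\<Sum>i\<in>S. f i) = (\<Sum>i\<in>S. smult s (f i))"
  by (rule poly_eqI) (simp add: coeff_sum sum_distrib_left)

lemma mult_sum_le:
  assumes "degree A \<le> N"
  shows "A \<star> B = (\<Sum>i\<le>N. smult (coeff A i) ((X^^i) B))"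
  unfolding ore_mult_def
  by (rule sum.mono_neutral_right[symmetric]) (use assms in \<open>auto simp: coeff_eq_0\<close>)

lemma mult_pCons: "pCons a A \<star> B = smult a B + A \<star> X B"
proof -
  have "pCons a A \<star> B = (\<Sum>i\<le>Suc (degree A). smult (coeff (pCons a A) i) ((X^^i) B))"
    by (rule mult_sum_le) (simp add: degree_pCons_le)
  also have "\<dots> = smult a B + (\<Sum>i\<le>degree A. smult (coeff A i) ((X^^i) (X B)))"
    by (subst sum.atMost_Suc_shift) (simp add: funpow_Suc_right del: funpow.simps)
  also have "\<dots> = smult a B + A \<star> X B" by (simp add: ore_mult_def)
  finally show ?thesis .
qed

lemma Xk_add: "(X^^k) (B + C) = (X^^k) B + (X^^k) C"
  by (induction k) (auto simp: X_add)
lemma Xk_diff: "(X^^k) (B - C) = (X^^k) B - (X^^k) C"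
  by (induction k) (auto simp: X_diff)
lemma Xk_0: "(X^^k) 0 = 0"
  by (induction k) (auto simp: X_0)
lemma Xk_smult_const: "(X^^k) (smult [:c:] B) = smult [:c:] ((X^^k) B)"
  by (induction k) (auto simp: X_smult_const)

lemma mult_0_left: "0 \<star> B = 0" by (simp add: ore_mult_def)
lemma mult_0_right: "A \<star> 0 = 0" by (simp add: ore_mult_def Xk_0)
lemma mult_const: "[:s:] \<star> B = smult s B" by (simp add: ore_mult_def)
lemma mult_one: "1 \<star> B = B" by (metis mult_const one_pCons smult_1_left)

lemma mult_add_left: "(A + A') \<star> B = A \<star> B + A' \<star> B"
proof -
  let ?N = "max (degree A) (degree A')"
  have "(A + A') \<star> B = (\<Sum>i\<le>?N. smult (coeff (A + A') i) ((X^^i) B))"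
    by (rule mult_sum_le) (simp add: degree_add_le)
  also have "\<dots> = (\<Sum>i\<le>?N. smult (coeff A i) ((X^^i) B)) + (\<Sum>i\<le>?N. smult (coeff A' i) ((X^^i) B))"
    by (simp add: smult_add_left sum.distrib)
  also have "\<dots> = A \<star> B + A' \<star> B"
    by (simp add: mult_sum_le[symmetric])
  finally show ?thesis .
qed

lemma mult_smult_left: "smult s A \<star> B = smult s (A \<star> B)"
proof -
  have "smult s A \<star> B = (\<Sum>i\<le>degree A. smult (coeff (smult s A) i) ((X^^i) B))"
    by (rule mult_sum_le) (simp add: degree_smult_le)
  also have "\<dots> = smult s (A \<star> B)"
    by (simp add: ore_mult_def smult_sum_r)
  finally show ?thesis .
qed

lemma mult_diff_left: "(A - A') \<star> B = A \<star> B - A' \<star> B"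
  using mult_add_left[of "A - A'" A' B] by simp

lemma mult_add_right: "A \<star> (B + C) = A \<star> B + A \<star> C"
  by (simp add: ore_mult_def Xk_add smult_add_right sum.distrib)

lemma mult_diff_right: "A \<star> (B - C) = A \<star> B - A \<star> C"
  using mult_add_right[of A "B - C" C] by simp

lemma mult_smult_right: "A \<star> (smult [:c:] B) = smult [:c:] (A \<star> B)"
  by (simp add: ore_mult_def Xk_smult_const smult_sum_r mult.commute)

lemma X_mult: "X B \<star> C = X (B \<star> C)"
proof (induction B arbitrary: C)
  case 0
  then show ?case by (simp add: X_0 mult_0_left)
next
  case (pCons b B)
  have "X (pCons b B) \<star> C = smult (\<delta> b) C + ([:\<sigma> b:] + X B) \<star> X C"
    by (simp add: X_pCons mult_pCons)
  also have "\<dots> = smult (\<delta> b) C + smult (\<sigma> b) (X C) + X (B \<star> X C)"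
    by (simp add: mult_add_left mult_const pCons.IH)
  also have "\<dots> = X (pCons b B \<star> C)"
    by (simp add: mult_pCons X_add X_smult)
  finally show ?case .
qed

lemma mult_assoc: "(A \<star> B) \<star> C = A \<star> (B \<star> C)"
proof (induction A arbitrary: B)
  case 0
  then show ?case by (simp add: mult_0_left)
next
  case (pCons a A)
  show ?case
    by (simp add: mult_pCons mult_add_left mult_smult_left pCons.IH X_mult)
qed


lemma X_deg:
  assumes "B \<noteq> 0"
  shows "degree (X B) = Suc (degree B) \<and> lead_coeff (X B) = \<sigma> (lead_coeff B)"
proof -
  have c: "coeff (X B) (Suc (degree B)) = \<sigma> (lead_coeff B)"
    by (simp add: coeff_X coeff_eq_0 d_0)
  have nz: "\<sigma> (lead_coeff B) \<noteq> 0" using assms s_eq0 by simp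
  have "degree (X B) \<le> Suc (degree B)"
    by (rule degree_le) (auto simp: coeff_X coeff_eq_0 s_0 d_0 split: nat.split)
  moreover have "Suc (degree B) \<le> degree (X B)"
    by (rule le_degree) (simp add: c nz)
  ultimately have "degree (X B) = Suc (degree B)" by simp
  then show ?thesis using c by simp
qed

lemma Xk_deg:
  assumes "B \<noteq> 0"
  shows "degree ((X^^k) B) = degree B + k \<and> lead_coeff ((X^^k) B) = (\<sigma>^^k) (lead_coeff B)"
proof (induction k)
  case 0
  then show ?case by simp
next
  case (Suc k)
  have "(X^^k) B \<noteq> 0"
  proof
    assume "(X^^k) B = 0"
    then have "(\<sigma>^^k) (lead_coeff B) = 0" using Suc by simp
    then show False using assms sk_eq0 by simp
  qed
  then show ?case using X_deg[of "(X^^k) B"] Suc by auto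
qed

lemma mult_deg:
  assumes A: "A \<noteq> 0" and B: "B \<noteq> 0"
  shows "degree (A \<star> B) = degree A + degree B \<and>
         lead_coeff (A \<star> B) = lead_coeff A * (\<sigma>^^degree A) (lead_coeff B)"
proof -
  have cf: "coeff (A \<star> B) k = (\<Sum>i\<le>degree A. coeff A i * coeff ((X^^i) B) k)" for k
    by (simp add: ore_mult_def coeff_sum)
  have z: "coeff ((X^^i) B) k = 0" if "degree B + i < k" for i k
    using Xk_deg[OF B, of i] that by (simp add: coeff_eq_0)
  have top: "coeff (A \<star> B) (degree A + degree B) = lead_coeff A * (\<sigma>^^degree A) (lead_coeff B)"
  proof -
    have "coeff (A \<star> B) (degree A + degree B) =
        coeff A (degree A) * coeff ((X^^degree A) B) (degree A + degree B)
        + (\<Sum>i\<in>{..degree A} - {degree A}. coeff A i * coeff ((X^^i) B) (degree A + degree B))"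
      unfolding cf by (rule sum.remove) auto
    also have "(\<Sum>i\<in>{..degree A} - {degree A}. coeff A i * coeff ((X^^i) B) (degree A + degree B)) = 0"
      by (rule sum.neutral) (auto intro!: z)
    finally show ?thesis using Xk_deg[OF B, of "degree A"] by (auto simp add: add.commute)
  qed
  have nz1: "(\<sigma>^^degree A) (lead_coeff B) \<noteq> 0"
    using B sk_eq0 by auto
  have nz: "lead_coeff A * (\<sigma>^^degree A) (lead_coeff B) \<noteq> 0"
    using A nz1 by simp
  have "degree (A \<star> B) \<le> degree A + degree B"
    by (rule degree_le) (auto simp: cf intro!: sum.neutral z)
  moreover have "degree A + degree B \<le> degree (A \<star> B)"
    by (rule le_degree) (metis top nz)
  ultimately show ?thesis using top by simp
qed

lemma mult_nz: "A \<noteq> 0 \<Longrightarrow> B \<noteq> 0 \<Longrightarrow> A \<star> B \<noteq> 0"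
  using mult_deg sk_eq0 by (metis leading_coeff_0_iff mult_eq_0_iff)


lemma X_monom: "X (monom 1 i) = monom 1 (Suc i)"
  by (rule poly_eqI) (auto simp: coeff_X coeff_monom s_one s_0 d_0 d_one split: nat.split)

lemma Xk_one: "(X^^i) 1 = monom 1 i"
proof (induction i)
  case 0
  show ?case by (simp add: monom_0 one_pCons)
next
  case (Suc i)
  then show ?case by (simp add: X_monom)
qed

lemma mult_one_right: "A \<star> 1 = A"
  by (simp add: ore_mult_def Xk_one smult_monom poly_as_sum_of_monoms)

abbreviation pw where "pw P k \<equiv> ore_pow \<sigma> \<delta> P k"

lemma pow_comm: "P \<star> pw P k = pw P k \<star> P"
proof (induction k)
  case 0
  then show ?case by (simp add: mult_one mult_one_right)
next
  case (Suc k)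
  have "P \<star> pw P (Suc k) = P \<star> (pw P k \<star> P)" by (simp add: Suc)
  also have "\<dots> = pw P (Suc k) \<star> P" by (simp add: mult_assoc)
  finally show ?case .
qed

lemma pow_deg: "P \<noteq> 0 \<Longrightarrow> pw P k \<noteq> 0 \<and> degree (pw P k) = k * degree P"
proof (induction k)
  case (Suc k)
  then show ?case using mult_deg[of P "pw P k"] mult_nz[of P "pw P k"] by simp
qed simp

lemma mult_sumK_left:
  "(\<Sum>i\<le>(M::nat). smult [:c i:] (F i)) \<star> B = (\<Sum>i\<le>M. smult [:c i:] (F i \<star> B))"
  by (induction M) (simp_all add: mult_add_left mult_smult_left)

lemma mult_sumK_right:
  "A \<star> (\<Sum>i\<le>(M::nat). smult [:c i:] (F i)) = (\<Sum>i\<le>M. smult [:c i:] (A \<star> F i))"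
  by (induction M) (simp_all add: mult_add_right mult_smult_right)

lemma K_sub_C: "ore_K_poly_in \<sigma> \<delta> P \<subseteq> ore_centralizer \<sigma> \<delta> P"
  by (auto simp: ore_K_poly_in_def ore_centralizer_def mult_sumK_left mult_sumK_right pow_comm)

lemma K_0: "0 \<in> ore_K_poly_in \<sigma> \<delta> P"
  unfolding ore_K_poly_in_def
  by (rule CollectI, rule exI[of _ "\<lambda>_. 0"], rule exI[of _ 0]) simp

lemma K_add:
  assumes "Q \<in> ore_K_poly_in \<sigma> \<delta> P"
  shows "Q + smult [:c:] (pw P k) \<in> ore_K_poly_in \<sigma> \<delta> P"
proof -
  from assms obtain c' M where Q: "Q = (\<Sum>i\<le>M. smult [:c' i:] (pw P i))"
    by (auto simp: ore_K_poly_in_def)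
  define N where "N = max M k"
  define c'' where "c'' i = (if i \<le> M then c' i else 0) + (if i = k then c else 0)" for i
  have pt: "smult [:c'' i:] (pw P i) = smult [:if i \<le> M then c' i else 0:] (pw P i)
       + (if i = k then smult [:c:] (pw P k) else 0)" for i
    by (cases "i = k") (simp_all add: c''_def smult_add_left[symmetric])
  have "(\<Sum>i\<le>N. smult [:c'' i:] (pw P i)) =
      (\<Sum>i\<le>N. smult [:if i \<le> M then c' i else 0:] (pw P i)) +
      (\<Sum>i\<le>N. (if i = k then smult [:c:] (pw P k) else 0))"
    by (simp only: pt sum.distrib)
  also have "(\<Sum>i\<le>N. smult [:if i \<le> M then c' i else 0:] (pw P i)) = Q"
    unfolding Q by (rule sum.mono_neutral_cong_right) (auto simp: N_def)
  also have "(\<Sum>i\<le>N. (if i = k then smult [:c:] (pw P k) else 0)) = smult [:c:] (pw P k)"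
    by (simp add: N_def)
  finally have fin: "(\<Sum>i\<le>N. smult [:c'' i:] (pw P i)) = Q + smult [:c:] (pw P k)" .
  show ?thesis unfolding ore_K_poly_in_def
    by (rule CollectI, rule exI[of _ c''], rule exI[of _ N], rule fin[symmetric])
qed

lemma C_diff:
  assumes "Q \<in> ore_centralizer \<sigma> \<delta> P"
  shows "Q - smult [:c:] (pw P k) \<in> ore_centralizer \<sigma> \<delta> P"
  using assms by (simp add: ore_centralizer_def mult_diff_left mult_diff_right
      mult_smult_left mult_smult_right pow_comm)

lemma lc_eq:
  assumes "Q \<in> ore_centralizer \<sigma> \<delta> P" "Q \<noteq> 0" "P \<noteq> 0"
  shows "lead_coeff Q * (\<sigma>^^degree Q) (lead_coeff P) = lead_coeff P * (\<sigma>^^degree P) (lead_coeff Q)"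
proof -
  have 1: "lead_coeff (Q \<star> P) = lead_coeff Q * (\<sigma>^^degree Q) (lead_coeff P)"
    using mult_deg[of Q P] assms by blast
  have 2: "lead_coeff (P \<star> Q) = lead_coeff P * (\<sigma>^^degree P) (lead_coeff Q)"
    using mult_deg[of P Q] assms by blast
  have "Q \<star> P = P \<star> Q" using assms(1) by (simp add: ore_centralizer_def)
  then show ?thesis using 1 2 by metis
qed

lemma dd_ge: "2 \<le> dd" using degs by (simp add: dd_def)

lemma deg_eq:
  assumes "q * (\<sigma>^^m) p = p * (\<sigma>^^n) q" "q \<noteq> 0" "p \<noteq> 0"
  shows "degree q + degree p * dd ^ m = degree p + degree q * dd ^ n"
proof -
  have "degree (q * (\<sigma>^^m) p) = degree (p * (\<sigma>^^n) q)" using assms(1) by simp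
  then show ?thesis using assms(2,3) sk_eq0 by (simp add: degree_mult_eq sk_degree)
qed

lemma deg_same:
  assumes "q1 * (\<sigma>^^m) p = p * (\<sigma>^^n) q1" "q1 \<noteq> 0"
    and "q2 * (\<sigma>^^m) p = p * (\<sigma>^^n) q2" "q2 \<noteq> 0" "p \<noteq> 0" "0 < n"
  shows "degree q1 = degree q2"
proof -
  have e1: "degree q1 + degree p * dd ^ m = degree p + degree q1 * dd ^ n" by (rule deg_eq) fact+
  have e2: "degree q2 + degree p * dd ^ m = degree p + degree q2 * dd ^ n" by (rule deg_eq) fact+
  have "1 < dd ^ n" using dd_ge assms(6) by (intro one_less_power) auto
  have "int (degree q1) - int (degree q2) = (int (degree q1) - int (degree q2)) * int (dd ^ n)"
    using arg_cong[OF e1, of int] arg_cong[OF e2, of int] by (simp add: algebra_simps)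
  then have h1: "(int (degree q1) - int (degree q2)) * (int (dd ^ n) - 1) = 0"
    by (simp add: algebra_simps)
  have h2: "int (dd ^ n) > 1" using \<open>1 < dd ^ n\<close> by (metis of_nat_1 of_nat_less_iff)
  from h1 h2 have "int (degree q1) - int (degree q2) = 0"
    by (metis mult_eq_0_iff eq_iff_diff_eq_0 less_irrefl)
  then show ?thesis by simp
qed

lemma lc_unique:
  assumes "q1 * (\<sigma>^^m) p = p * (\<sigma>^^n) q1"
    and "q2 * (\<sigma>^^m) p = p * (\<sigma>^^n) q2" "q2 \<noteq> 0" "p \<noteq> 0" "0 < n"
  shows "\<exists>c. q1 = smult c q2"
proof (cases "q1 = 0")
  case True
  then show ?thesis by (intro exI[of _ 0]) simp
next
  case False
  define c where "c = lead_coeff q1 / lead_coeff q2"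
  define r where "r = q1 - smult c q2"
  have dq: "degree q1 = degree q2" by (rule deg_same[OF assms(1) False assms(2-5)])
  have "r * (\<sigma>^^m) p = q1 * (\<sigma>^^m) p - smult c (q2 * (\<sigma>^^m) p)"
    by (simp add: r_def algebra_simps)
  also have "\<dots> = p * (\<sigma>^^n) q1 - smult c (p * (\<sigma>^^n) q2)" using assms(1,2) by simp
  also have "\<dots> = p * (\<sigma>^^n) r" by (simp add: r_def sk_diff sk_smult algebra_simps)
  finally have er: "r * (\<sigma>^^m) p = p * (\<sigma>^^n) r" .
  have cr: "coeff r (degree q2) = 0"
    using assms(3) dq by (simp add: r_def c_def)
  have "r = 0"
  proof (rule ccontr)
    assume rn: "r \<noteq> 0"
    have "degree r = degree q2" by (rule deg_same[OF er rn assms(2-5)])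
    then show False using cr rn by (metis leading_coeff_0_iff)
  qed
  then show ?thesis unfolding r_def by auto
qed


lemma C_sub_K:
  assumes n: "0 < degree P" and a0: "0 < degree (lead_coeff P)"
    and an: "degree (lead_coeff P) \<le> degree P"
  shows "Q \<in> ore_centralizer \<sigma> \<delta> P \<Longrightarrow> Q \<in> ore_K_poly_in \<sigma> \<delta> P"
proof (induction "degree Q" arbitrary: Q rule: less_induct)
  case less
  show ?case
  proof (cases "Q = 0")
    case True
    then show ?thesis using K_0 by simp
  next
    case False
    have P0: "P \<noteq> 0" using n by auto
    define m where "m = degree Q"
    define p where "p = lead_coeff P"
    have p0: "p \<noteq> 0" using P0 by (simp add: p_def)
    have eQ: "lead_coeff Q * (\<sigma>^^m) p = p * (\<sigma>^^degree P) (lead_coeff Q)"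
      using lc_eq[OF less.prems False P0] by (simp add: m_def p_def)
    have "degree (lead_coeff Q) + degree p * dd ^ m = degree p + degree (lead_coeff Q) * dd ^ degree P"
      by (rule deg_eq[OF eQ]) (use False p0 in auto)
    then have "degree P dvd m"
      by (intro nt_dvd[OF dd_ge n]) (use a0 an p_def in auto)
    then obtain k where mk: "m = degree P * k" by (elim dvdE)
    have R: "pw P k \<noteq> 0 \<and> degree (pw P k) = k * degree P" by (rule pow_deg[OF P0])
    have RC: "pw P k \<in> ore_centralizer \<sigma> \<delta> P"
      using pow_comm[of P k] by (simp add: ore_centralizer_def)
    have eR: "lead_coeff (pw P k) * (\<sigma>^^m) p = p * (\<sigma>^^degree P) (lead_coeff (pw P k))"
      using lc_eq[OF RC _ P0] R mk by (simp add: p_def mult.commute)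
    have lR: "lead_coeff (pw P k) \<noteq> 0" using R by (metis leading_coeff_0_iff)
    obtain c where c: "lead_coeff Q = smult c (lead_coeff (pw P k))"
      using lc_unique[OF eQ eR lR p0 n] by blast
    define Q' where "Q' = Q - smult [:c:] (pw P k)"
    have Q'C: "Q' \<in> ore_centralizer \<sigma> \<delta> P" using C_diff[OF less.prems] by (simp add: Q'_def)
    have dR: "degree (smult [:c:] (pw P k)) \<le> m"
      using R mk degree_smult_le[of "[:c:]" "pw P k"] by (simp add: mult.commute)
    have dQ': "degree Q' \<le> m"
      unfolding Q'_def by (rule degree_diff_le) (use dR in \<open>auto simp: m_def\<close>)
    have cm: "coeff Q' m = 0"
      using c R mk by (simp add: Q'_def m_def mult.commute)
    have "Q' \<in> ore_K_poly_in \<sigma> \<delta> P"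
    proof (cases "Q' = 0")
      case True
      then show ?thesis using K_0 by simp
    next
      case False
      then have "degree Q' < m" using dQ' cm by (metis le_neq_implies_less leading_coeff_0_iff)
      then show ?thesis using less.hyps Q'C m_def by blast
    qed
    then have "Q' + smult [:c:] (pw P k) \<in> ore_K_poly_in \<sigma> \<delta> P" by (rule K_add)
    then show ?thesis by (simp add: Q'_def)
  qed
qed

end

theorem proposition5p6:
  fixes \<sigma> \<delta> :: "'a::field poly \<Rightarrow> 'a poly" and P :: "'a poly poly"
  assumes "K_alg_endo \<sigma>"
    and "degree (\<sigma> [:0, 1:]) > 1"
    and "sigma_derivation \<sigma> \<delta>"
    and "degree P > 0"
    and "0 < degree (lead_coeff P)"
    and "degree (lead_coeff P) \<le> degree P"
  shows "ore_centralizer \<sigma> \<delta> P = ore_K_poly_in \<sigma> \<delta> P"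
proof -
  interpret ore \<sigma> \<delta> using assms(1-3) by unfold_locales
  show ?thesis using K_sub_C C_sub_K[OF assms(4-6)] by blast
qed

end
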